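(* Let $\mathcal{M}=(E,\mathcal{C})$ be a loopless oriented matroid with $E=\{e_1,\dots,e_m\}$ ordered $e_1\prec\cdots\prec e_m$, and let $1\le k\le m$. The map $\psi_k:\mathscr{N}_{k-1}\to\mathscr{N}_k$ is surjective: for every $(N_k,A_k)\in\mathscr{N}_k$ there is $(N_{k-1},A_{k-1})\in\mathscr{N}_{k-1}$ with $\psi_k(N_{k-1},A_{k-1})=(N_k,A_k)$.
   Context: A signed subset of a finite set $E$ is a pair $X=(X^+,X^-)$ of disjoint subsets; support $\underline{X}=X^+\cup X^-$, $-X=(X^-,X^+)$. An oriented matroid $\mathcal{M}=(E,\mathcal{C})$: a collection $\mathcal{C}$ of signed subsets with (C1) empty signed set not in $\mathcal{C}$; (C2) $\mathcal{C}=-\mathcal{C}$; (C3) $\underline{X}\subseteq\underline{Y}$ for $X,Y\in\mathcal{C}$ implies $X=\pm Y$; (C4) for $X,Y\in\mathcal{C}$, $X\neq\pm Y$, $e\in X^+\cap Y^-$ there is $Z\in\mathcal{C}$ with $Z^+\subseteq X^+\cup Y^+-\{e\}$, $Z^-\subseteq X^-\cup Y^--\{e\}$. Underlying matroid $\underline{\mathcal{M}}$: circuits $\underline{X}$, $X\in\mathcal{C}$; loopless means no one-element circuit. Positive circuit: $X^-=\emptyset$; acyclic: no positive circuit. Reorientation ${}_{-A}\mathcal{M}$ ($A\subseteq E$): signed circuits ${}_{-A}X=((X^+-A)\cup(X^-\cap A),(X^--A)\cup(X^+\cap A))$; ${}_{-e}={}_{-\{e\}}$. Deletion $\mathcal{M}\backslash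 X$ on $E-X$: signed circuits $Y\in\mathcal{C}$ with $\underline{Y}\subseteq E-X$. Contraction $\mathcal{M}/X$ on $E-X$: support-minimal nonempty members of $\{(Y^+-X,Y^--X):Y\in\mathcal{C},\underline{Y}-X\ne\emptyset\}$. Broken circuit: circuit of $\underline{\mathcal{M}}$ minus its $\prec$-maximal element; $\mathrm{NBC}(\underline{\mathcal{M}})$: subsets of $E$ containing no broken circuit. $E_k=\{e_1,\dots,e_k\}$; for $N_k\subseteq E_k$, $N_k^c=E_k-N_k$. $\mathscr{N}_k$ is the set of pairs $(N_k,A_k)$ with $N_k\subseteq E_k$, $A_k\subseteq E-E_k$, $N_k\in\mathrm{NBC}(\underline{\mathcal{M}})$, and $\mathcal{M}_k:={}_{-A_k}(\mathcal{M}\backslash N_k^c/N_k)$ acyclic. For $(N_{k-1},A_{k-1})\in\mathscr{N}_{k-1}$ with $\mathcal{M}_{k-1}={}_{-A_{k-1}}(\mathcal{M}\backslash N_{k-1}^c/N_{k-1})$: $\psi_k(N_{k-1},A_{k-1})=(N_{k-1}\cup\{e_k\},A_{k-1})$ if $e_k\notin A_{k-1}$ and ${}_{-e_k}\mathcal{M}_{k-1}$ is acyclic; $=(N_{k-1},A_{k-1})$ if $e_k\notin A_{k-1}$ and ${}_{-e_k}\mathcal{M}_{k-1}$ is not acyclic; $=(N_{k-1},A_{k-1}-\{e_k\})$ if $e_k\in A_{k-1}$. *)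

theory Defs
  imports Main
begin

text \<open>Signed subsets of a ground set are pairs (X+, X-) of disjoint sets.\<close>
type_synonym 'a signed = "'a set \<times> 'a set"

definition supp :: "'a signed \<Rightarrow> 'a set" where
  "supp X = fst X \<union> snd X"

definition sneg :: "'a signed \<Rightarrow> 'a signed" where
  "sneg X = (snd X, fst X)"

definition signed_subset :: "'a set \<Rightarrow> 'a signed \<Rightarrow> bool" where
  "signed_subset E X \<longleftrightarrow> fst X \<inter> snd X = {} \<and> supp X \<subseteq> E"

definition oriented_matroid :: "'a set \<Rightarrow> 'a signed set \<Rightarrow> bool" where
  "oriented_matroid E \<C> \<longleftrightarrow>
     finite E \<and>
     (\<forall>X\<in>\<C>. signed_subset E X) \<and>
     ({}, {}) \<notin> \<C> \<and>
     (\<forall>X\<in>\<C>. sneg X \<in> \<C>) \<and>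
     (\<forall>X\<in>\<C>. \<forall>Y\<in>\<C>. supp X \<subseteq> supp Y \<longrightarrow> X = Y \<or> X = sneg Y) \<and>
     (\<forall>X\<in>\<C>. \<forall>Y\<in>\<C>. \<forall>e. X \<noteq> Y \<and> X \<noteq> sneg Y \<and> e \<in> fst X \<inter> snd Y \<longrightarrow>
        (\<exists>Z\<in>\<C>. fst Z \<subseteq> (fst X \<union> fst Y) - {e} \<and> snd Z \<subseteq> (snd X \<union> snd Y) - {e}))"

definition loopless :: "'a signed set \<Rightarrow> bool" where
  "loopless \<C> \<longleftrightarrow> (\<forall>X\<in>\<C>. card (supp X) \<noteq> 1)"

definition acyclic_om :: "'a signed set \<Rightarrow> bool" where
  "acyclic_om \<C> \<longleftrightarrow> \<not> (\<exists>X\<in>\<C>. snd X = {})"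

definition reorient_signed :: "'a set \<Rightarrow> 'a signed \<Rightarrow> 'a signed" where
  "reorient_signed A X = ((fst X - A) \<union> (snd X \<inter> A), (snd X - A) \<union> (fst X \<inter> A))"

definition reorient :: "'a set \<Rightarrow> 'a signed set \<Rightarrow> 'a signed set" where
  "reorient A \<C> = reorient_signed A ` \<C>"

definition om_delete :: "'a set \<Rightarrow> 'a signed set \<Rightarrow> 'a set \<Rightarrow> 'a signed set" where
  "om_delete E \<C> X = {Y\<in>\<C>. supp Y \<subseteq> E - X}"

definition om_contract :: "'a signed set \<Rightarrow> 'a set \<Rightarrow> 'a signed set" where
  "om_contract \<C> X =
    (let F = {(fst Y - X, snd Y - X) | Y. Y \<in> \<C> \<and> supp Y - X \<noteq> {}}
     in {W\<in>F. supp W \<noteq> {} \<and> \<not> (\<exists>W'\<in>F. supp W' \<noteq> {} \<and> supp W' \<subset> supp W)})"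

text \<open>Ground set ordered by a distinct list es = [e_1,...,e_m]; e_k = es ! (k-1),
  E_k = set (take k es).  Broken circuit: circuit minus its largest element.\<close>
definition broken :: "'a list \<Rightarrow> 'a set \<Rightarrow> 'a set" where
  "broken es D = D - {es ! Max {i. i < length es \<and> es ! i \<in> D}}"

definition nbc :: "'a set \<Rightarrow> 'a signed set \<Rightarrow> 'a list \<Rightarrow> 'a set \<Rightarrow> bool" where
  "nbc E \<C> es N \<longleftrightarrow> N \<subseteq> E \<and> \<not> (\<exists>X\<in>\<C>. broken es (supp X) \<subseteq> N)"

definition Ek :: "'a list \<Rightarrow> nat \<Rightarrow> 'a set" where
  "Ek es k = set (take k es)"

definition minorM :: "'a set \<Rightarrow> 'a signed set \<Rightarrow> 'a list \<Rightarrow> nat \<Rightarrow> 'a set \<Rightarrow> 'a set \<Rightarrow> 'a signed set" where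
  "minorM E \<C> es k N A = reorient A (om_contract (om_delete E \<C> (Ek es k - N)) N)"

definition scriptN :: "'a set \<Rightarrow> 'a signed set \<Rightarrow> 'a list \<Rightarrow> nat \<Rightarrow> ('a set \<times> 'a set) set" where
  "scriptN E \<C> es k = {(N, A). N \<subseteq> Ek es k \<and> A \<subseteq> E - Ek es k \<and> nbc E \<C> es N
                               \<and> acyclic_om (minorM E \<C> es k N A)}"

definition psi :: "'a set \<Rightarrow> 'a signed set \<Rightarrow> 'a list \<Rightarrow> nat \<Rightarrow> 'a set \<times> 'a set \<Rightarrow> 'a set \<times> 'a set" where
  "psi E \<C> es k p =
     (let N = fst p; A = snd p; e = es ! (k - 1) in
      if e \<notin> A then
        (if acyclic_om (reorient {e} (minorM E \<C> es (k - 1) N A)) then (N \<union> {e}, A) else (N, A))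
      else (N, A - {e}))"

end

theory Submission
  imports Defs
begin

definition negs :: "'a set \<Rightarrow> 'a set \<Rightarrow> 'a signed \<Rightarrow> 'a set" where
  "negs N B Y = (snd Y - N - B) \<union> ((fst Y - N) \<inter> B)"

lemma sneg_sneg[simp]: "sneg (sneg X) = X"
  by (simp add: sneg_def)

lemma supp_sneg[simp]: "supp (sneg X) = supp X"
  by (auto simp: sneg_def supp_def)

lemma om_C4:
  assumes om: "oriented_matroid E \<C>" and "X \<in> \<C>" "Y \<in> \<C>" "X \<noteq> Y" "X \<noteq> sneg Y"
    "e \<in> fst X" "e \<in> snd Y"
  shows "\<exists>Z\<in>\<C>. fst Z \<subseteq> (fst X \<union> fst Y) - {e} \<and> snd Z \<subseteq> (snd X \<union> snd Y) - {e}"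
proof -
  have C4: "\<forall>X\<in>\<C>. \<forall>Y\<in>\<C>. \<forall>e. X \<noteq> Y \<and> X \<noteq> sneg Y \<and> e \<in> fst X \<inter> snd Y \<longrightarrow>
        (\<exists>Z\<in>\<C>. fst Z \<subseteq> (fst X \<union> fst Y) - {e} \<and> snd Z \<subseteq> (snd X \<union> snd Y) - {e})"
    using om unfolding oriented_matroid_def by (elim conjE)
  show ?thesis using C4 assms(2-7) by blast
qed

lemma elim':
  assumes om: "oriented_matroid E \<C>" and Y0: "Y0 \<in> \<C>" and Y': "Y' \<in> \<C>"
    and ne: "Y0 \<noteq> Y'" "Y0 \<noteq> sneg Y'"
    and f0: "f \<in> supp Y0 - N" "f \<notin> negs N B Y0" and f1: "f \<in> negs N B Y'"
  shows "\<exists>Z\<in>\<C>. fst Z \<subseteq> fst Y0 \<union> fst Y' - {f} \<and> snd Z \<subseteq> snd Y0 \<union> snd Y' - {f}"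
proof (cases "f \<in> B")
  case False
  then have "f \<in> fst Y0" "f \<in> snd Y'" using f0 f1 unfolding negs_def supp_def by blast+
  then show ?thesis using om_C4[OF om Y0 Y' ne] by blast
next
  case True
  then have a: "f \<in> fst Y'" "f \<in> snd Y0" using f0 f1 unfolding negs_def supp_def by blast+
  have b: "Y' \<noteq> Y0" using ne(1) by (rule not_sym)
  have c: "Y' \<noteq> sneg Y0"
  proof
    assume "Y' = sneg Y0"
    then have "Y0 = sneg Y'" by simp
    then show False using ne(2) by contradiction
  qed
  obtain Z where "Z \<in> \<C>" "fst Z \<subseteq> (fst Y' \<union> fst Y0) - {f}" "snd Z \<subseteq> (snd Y' \<union> snd Y0) - {f}"
    using om_C4[OF om Y' Y0 b c a] by blast
  then show ?thesis by blast
qed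

lemma supp_sub_E:
  assumes om: "oriented_matroid E \<C>" and "Y \<in> \<C>" shows "supp Y \<subseteq> E"
proof -
  have "\<forall>X\<in>\<C>. signed_subset E X" using om unfolding oriented_matroid_def by (elim conjE)
  then have "signed_subset E Y" using assms(2) by blast
  then show ?thesis unfolding signed_subset_def by (elim conjE)
qed

lemma acyc_iff:
  assumes om: "oriented_matroid E \<C>" and ind: "\<forall>Y\<in>\<C>. \<not> supp Y \<subseteq> N"
  shows "acyclic_om (reorient B (om_contract (om_delete E \<C> D) N)) \<longleftrightarrow>
    \<not> (\<exists>Y\<in>\<C>. supp Y \<inter> D = {} \<and> supp Y - N \<noteq> {} \<and> negs N B Y = {})"
proof
  assume acy: "acyclic_om (reorient B (om_contract (om_delete E \<C> D) N))"
  show "\<not> (\<exists>Y\<in>\<C>. supp Y \<inter> D = {} \<and> supp Y - N \<noteq> {} \<and> negs N B Y = {})"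
  proof
    assume "\<exists>Y\<in>\<C>. supp Y \<inter> D = {} \<and> supp Y - N \<noteq> {} \<and> negs N B Y = {}"
    then obtain Ya where Ya: "Ya \<in> \<C> \<and> supp Ya \<inter> D = {} \<and> supp Ya - N \<noteq> {} \<and> negs N B Ya = {}"
      by blast
    define P where "P Y \<longleftrightarrow> Y \<in> \<C> \<and> supp Y \<inter> D = {} \<and> supp Y - N \<noteq> {} \<and> negs N B Y = {}" for Y
    have "P Ya" using Ya P_def by blast
    then obtain Y0 where Y0: "P Y0" and Y0min: "\<And>Y. P Y \<Longrightarrow> card (supp Y0 - N) \<le> card (supp Y - N)"
      using ex_has_least_nat[of P Ya "\<lambda>Y. card (supp Y - N)"] by blast
    have Y0C: "Y0 \<in> \<C>" and Y0D: "supp Y0 \<inter> D = {}" and Y0N: "supp Y0 - N \<noteq> {}"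
      and Y0n: "negs N B Y0 = {}" using Y0 unfolding P_def by auto
    have finE: "finite E" using om unfolding oriented_matroid_def by blast
    have minimal: "\<not> (\<exists>Y1\<in>\<C>. supp Y1 \<inter> D = {} \<and> supp Y1 - N \<noteq> {} \<and> supp Y1 - N \<subset> supp Y0 - N)"
    proof
      assume "\<exists>Y1\<in>\<C>. supp Y1 \<inter> D = {} \<and> supp Y1 - N \<noteq> {} \<and> supp Y1 - N \<subset> supp Y0 - N"
      then obtain Y1 where Y1: "Y1\<in>\<C> \<and> supp Y1 \<inter> D = {} \<and> supp Y1 - N \<noteq> {} \<and> supp Y1 - N \<subset> supp Y0 - N" by blast
      define T where "T Y \<longleftrightarrow> Y\<in>\<C> \<and> supp Y \<inter> D = {} \<and> supp Y - N \<noteq> {} \<and> supp Y - N \<subset> supp Y0 - N" for Y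
      have "T Y1" using Y1 unfolding T_def by blast
      then obtain Y' where Y': "T Y'" and Y'min: "\<And>Y. T Y \<Longrightarrow> card (negs N B Y') \<le> card (negs N B Y)"
        using ex_has_least_nat[of T Y1 "\<lambda>Y. card (negs N B Y)"] by blast
      have Y'C: "Y' \<in> \<C>" and Y'D: "supp Y' \<inter> D = {}" and Y'N: "supp Y' - N \<noteq> {}"
        and Y'S: "supp Y' - N \<subset> supp Y0 - N" using Y' unfolding T_def by auto
      have "supp Y0 \<subseteq> E" using supp_sub_E[OF om Y0C] .
      then have finS: "finite (supp Y0 - N)" using finE finite_subset by blast
      show False
      proof (cases "negs N B Y' = {}")
        case True
        then have "P Y'" using Y'C Y'D Y'N unfolding P_def by blast
        moreover have "card (supp Y' - N) < card (supp Y0 - N)"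
          using Y'S finS psubset_card_mono by blast
        ultimately show False using Y0min by fastforce
      next
        case False
        then obtain f where f: "f \<in> negs N B Y'" by blast
        have fY': "f \<in> supp Y' - N" using f unfolding negs_def supp_def by blast
        then have f0: "f \<in> supp Y0 - N" using Y'S by blast
        have f0n: "f \<notin> negs N B Y0" using Y0n by blast
        have ne1: "Y0 \<noteq> Y'" using Y'S by blast
        have ne2: "Y0 \<noteq> sneg Y'"
        proof
          assume "Y0 = sneg Y'"
          then have "supp Y0 = supp Y'" by simp
          then show False using Y'S by blast
        qed
        obtain Z where Z: "Z\<in>\<C>" "fst Z \<subseteq> fst Y0 \<union> fst Y' - {f}" "snd Z \<subseteq> snd Y0 \<union> snd Y' - {f}"
          using elim'[OF om Y0C Y'C ne1 ne2 f0 f0n f] by blast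
        have sZ: "supp Z \<subseteq> supp Y0 \<union> supp Y' - {f}" using Z unfolding supp_def by blast
        have "supp Z - N \<noteq> {}" using ind Z by blast
        moreover have "supp Z - N \<subset> supp Y0 - N" using sZ f0 Y'S by blast
        moreover have "supp Z \<inter> D = {}" using sZ Y'D Y0D by blast
        ultimately have TZ: "T Z" using Z(1) unfolding T_def by blast
        have nZ: "negs N B Z \<subseteq> negs N B Y' - {f}"
          using Z Y0n unfolding negs_def by blast
        have "negs N B Y' \<subseteq> supp Y' - N" unfolding negs_def supp_def by blast
        then have "negs N B Y' \<subseteq> supp Y0 - N" using Y'S by blast
        then have finY': "finite (negs N B Y')" using finS finite_subset by blast
        have "negs N B Z \<subset> negs N B Y'" using nZ f by blast
        then have "card (negs N B Z) < card (negs N B Y')" using finY' psubset_card_mono by blast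
        then show False using Y'min TZ by fastforce
      qed
    qed
    define W where "W = (fst Y0 - N, snd Y0 - N)"
    have sW: "supp W = supp Y0 - N" by (auto simp: W_def supp_def)
    have Y0d: "Y0 \<in> om_delete E \<C> D" using Y0C Y0D supp_sub_E[OF om Y0C] unfolding om_delete_def by blast
    have "W \<in> om_contract (om_delete E \<C> D) N"
      unfolding om_contract_def Let_def
    proof (rule CollectI, intro conjI)
      show "W \<in> {(fst Y - N, snd Y - N) |Y. Y \<in> om_delete E \<C> D \<and> supp Y - N \<noteq> {}}"
        using Y0d Y0N W_def by blast
      show "supp W \<noteq> {}" using sW Y0N by simp
      show "\<not> (\<exists>W'\<in>{(fst Y - N, snd Y - N) |Y. Y \<in> om_delete E \<C> D \<and> supp Y - N \<noteq> {}}.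
            supp W' \<noteq> {} \<and> supp W' \<subset> supp W)"
      proof
        assume "\<exists>W'\<in>{(fst Y - N, snd Y - N) |Y. Y \<in> om_delete E \<C> D \<and> supp Y - N \<noteq> {}}.
            supp W' \<noteq> {} \<and> supp W' \<subset> supp W"
        then obtain Y1 where "Y1 \<in> om_delete E \<C> D" "supp Y1 - N \<noteq> {}"
          "supp (fst Y1 - N, snd Y1 - N) \<subset> supp W" by blast
        moreover have "supp (fst Y1 - N, snd Y1 - N) = supp Y1 - N" by (auto simp: supp_def)
        ultimately show False using minimal sW by (auto simp: om_delete_def)
      qed
    qed
    moreover have "snd (reorient_signed B W) = {}"
      using Y0n unfolding reorient_signed_def W_def negs_def by auto
    ultimately show False using acy by (auto simp: acyclic_om_def reorient_def)
  qed
next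
  assume np: "\<not> (\<exists>Y\<in>\<C>. supp Y \<inter> D = {} \<and> supp Y - N \<noteq> {} \<and> negs N B Y = {})"
  show "acyclic_om (reorient B (om_contract (om_delete E \<C> D) N))"
    unfolding acyclic_om_def
  proof
    assume "\<exists>X\<in>reorient B (om_contract (om_delete E \<C> D) N). snd X = {}"
    then obtain W where W: "W \<in> om_contract (om_delete E \<C> D) N" "snd (reorient_signed B W) = {}"
      unfolding reorient_def by blast
    from W(1) obtain Y where Y0: "Y \<in> om_delete E \<C> D" "supp Y - N \<noteq> {}" "W = (fst Y - N, snd Y - N)"
      unfolding om_contract_def Let_def by blast
    then have Y: "Y \<in> om_delete E \<C> D" "supp Y - N \<noteq> {}"
      "snd (reorient_signed B (fst Y - N, snd Y - N)) = {}" using W(2) by auto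
    then have "negs N B Y = {}" by (auto simp: reorient_signed_def negs_def)
    moreover have "Y \<in> \<C>" "supp Y \<inter> D = {}" using Y by (auto simp: om_delete_def)
    ultimately show False using np Y by blast
  qed
qed


lemma reorient_comp:
  assumes "e \<notin> A" shows "reorient {e} (reorient A S) = reorient (insert e A) S"
proof -
  have "reorient_signed {e} (reorient_signed A X) = reorient_signed (insert e A) X" for X :: "'a signed"
    using assms by (auto simp: reorient_signed_def)
  then show ?thesis by (simp add: reorient_def image_image)
qed

definition Pos :: "'a signed set \<Rightarrow> 'a set \<Rightarrow> 'a set \<Rightarrow> 'a set \<Rightarrow> bool" where
  "Pos \<C> D N B \<longleftrightarrow> (\<exists>Y\<in>\<C>. supp Y \<inter> D = {} \<and> supp Y - N \<noteq> {} \<and> negs N B Y = {})"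

lemma acyc_minor:
  assumes om: "oriented_matroid E \<C>" and ind: "\<forall>Y\<in>\<C>. \<not> supp Y \<subseteq> N"
  shows "acyclic_om (minorM E \<C> es k N B) \<longleftrightarrow> \<not> Pos \<C> (Ek es k - N) N B"
  using acyc_iff[OF om ind] by (simp add: minorM_def Pos_def)

lemma acyc_minor2:
  assumes om: "oriented_matroid E \<C>" and ind: "\<forall>Y\<in>\<C>. \<not> supp Y \<subseteq> N" and "e \<notin> B"
  shows "acyclic_om (reorient {e} (minorM E \<C> es k N B)) \<longleftrightarrow> \<not> Pos \<C> (Ek es k - N) N (insert e B)"
  using acyc_iff[OF om ind] assms(3) by (simp add: minorM_def Pos_def reorient_comp)

lemma nbc_ind: "nbc E \<C> es N \<Longrightarrow> N' \<subseteq> N \<Longrightarrow> \<forall>Y\<in>\<C>. \<not> supp Y \<subseteq> N'"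
  unfolding nbc_def broken_def by blast

lemma set_take_idx:
  assumes "distinct es" "x \<in> set (take j es)" "i < length es" "es ! i = x"
  shows "i < j"
proof -
  obtain i' where "i' < length (take j es)" "take j es ! i' = x" using assms(2) by (auto simp: in_set_conv_nth)
  then have "i' < j" "i' < length es" "es ! i' = x" by auto
  then have "i' = i" using assms nth_eq_iff_index_eq by metis
  then show ?thesis using \<open>i' < j\<close> by simp
qed

lemma nbc_loop:
  assumes dist: "distinct es" and nbcN: "nbc E \<C> es N" and NE: "N \<subseteq> Ek es (k - 1)"
    and k: "1 \<le> k" "k \<le> length es"
    and Y: "Y \<in> \<C>" and sY: "supp Y \<subseteq> insert (es ! (k - 1)) N"
  shows False
proof (cases "es ! (k - 1) \<in> supp Y")
  case False
  then show False using nbc_ind[OF nbcN] Y sY by blast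
next
  case True
  let ?I = "{i. i < length es \<and> es ! i \<in> supp Y}"
  have fin: "finite ?I" by simp
  have kin: "k - 1 \<in> ?I" using True k by auto
  have le: "i \<le> k - 1" if "i \<in> ?I" for i
  proof (cases "es ! i = es ! (k - 1)")
    case True
    then show ?thesis using that dist k nth_eq_iff_index_eq by fastforce
  next
    case False
    then have "es ! i \<in> N" using that sY by auto
    then have "es ! i \<in> set (take (k - 1) es)" using NE by (auto simp: Ek_def)
    then show ?thesis using set_take_idx[OF dist] that by fastforce
  qed
  have "Max ?I = k - 1" using fin kin le by (meson Max_eqI)
  then have "broken es (supp Y) \<subseteq> N" using sY by (auto simp: broken_def)
  then show False using nbcN Y by (auto simp: nbc_def)
qed

lemma psi_eq:
  assumes "e = es ! (k - 1)"
  shows "psi E \<C> es k (N, A) = (if e \<notin> A then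
        (if acyclic_om (reorient {e} (minorM E \<C> es (k - 1) N A)) then (N \<union> {e}, A) else (N, A))
      else (N, A - {e}))"
  using assms unfolding psi_def Let_def by simp

theorem lemma2p5:
  fixes E :: "'a set" and \<C> :: "'a signed set" and es :: "'a list" and k :: nat
  assumes "oriented_matroid E \<C>"
    and "loopless \<C>"
    and "distinct es" and "set es = E"
    and "1 \<le> k" and "k \<le> length es"
  shows "\<forall>p \<in> scriptN E \<C> es k. \<exists>q \<in> scriptN E \<C> es (k - 1). psi E \<C> es k q = p"
proof
  note om = assms(1) and dist = assms(3) and k = assms(5,6)
  fix p assume p: "p \<in> scriptN E \<C> es k"
  obtain N A where pNA: "p = (N, A)" by (cases p)
  define e where "e = es ! (k - 1)"
  have tk: "take k es = take (k - 1) es @ [e]"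
    using k take_Suc_conv_app_nth[of "k - 1" es] by (simp add: e_def)
  have Ekk: "Ek es k = insert e (Ek es (k - 1))" using tk by (auto simp: Ek_def)
  have eE: "e \<in> E" using k assms(4) e_def by auto
  have enot: "e \<notin> Ek es (k - 1)"
  proof
    assume "e \<in> Ek es (k - 1)"
    moreover have "k - 1 < length es" using k by simp
    ultimately show False using set_take_idx[OF dist, of e "k - 1" "k - 1"] by (auto simp: Ek_def e_def)
  qed
  have EkE: "Ek es j \<subseteq> E" for j using assms(4) by (auto simp: Ek_def dest: in_set_takeD)
  have NEk: "N \<subseteq> Ek es k" and AE: "A \<subseteq> E - Ek es k" and nbcN: "nbc E \<C> es N"
    and acy: "acyclic_om (minorM E \<C> es k N A)"
    using p pNA by (auto simp: scriptN_def)
  have eA: "e \<notin> A" using AE Ekk by auto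
  have notPos: "\<not> Pos \<C> (Ek es k - N) N A"
    using acy acyc_minor[OF om nbc_ind[OF nbcN order_refl]] by blast
  show "\<exists>q \<in> scriptN E \<C> es (k - 1). psi E \<C> es k q = p"
  proof (cases "e \<in> N")
    case True
    define N' where "N' = N - {e}"
    have D: "Ek es (k - 1) - N' = Ek es k - N" using True Ekk enot by (auto simp: N'_def)
    have nbcN': "nbc E \<C> es N'" using nbcN by (auto simp: nbc_def N'_def)
    have indN': "\<forall>Y\<in>\<C>. \<not> supp Y \<subseteq> N'" using nbc_ind[OF nbcN] N'_def by blast
    have mono: "\<not> Pos \<C> (Ek es k - N) N' B" if "B - N = A - N" for B
    proof
      assume "Pos \<C> (Ek es k - N) N' B"
      then obtain Y where Y: "Y\<in>\<C>" "supp Y \<inter> (Ek es k - N) = {}" "negs N' B Y = {}"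
        by (auto simp: Pos_def)
      have "supp Y - N \<noteq> {}" using nbc_ind[OF nbcN order_refl] Y by blast
      moreover have "negs N A Y = {}" using Y(3) that unfolding negs_def N'_def by blast
      ultimately show False using notPos Y by (auto simp: Pos_def)
    qed
    have q: "(N', A) \<in> scriptN E \<C> es (k - 1)"
      unfolding scriptN_def
      using NEk AE Ekk nbcN' mono[of A] acyc_minor[OF om indN', of es "k - 1" A] D
      by (auto simp: N'_def)
    have "acyclic_om (reorient {e} (minorM E \<C> es (k - 1) N' A))"
      using acyc_minor2[OF om indN' eA, of es "k - 1"] D mono[of "insert e A"] True by auto
    then have "psi E \<C> es k (N', A) = p"
      using psi_eq[OF e_def, of E \<C> N' A] eA True pNA by (simp add: N'_def insert_absorb)
    then show ?thesis using q by blast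
  next
    case False
    have NE1: "N \<subseteq> Ek es (k - 1)" using NEk Ekk False by auto
    have D: "Ek es k - N = insert e (Ek es (k - 1) - N)" using Ekk False by auto
    have ind: "\<forall>Y\<in>\<C>. \<not> supp Y \<subseteq> N" using nbc_ind[OF nbcN order_refl] .
    have AE1: "A \<subseteq> E - Ek es (k - 1)" using AE Ekk by auto
    have key: "\<not> (Pos \<C> (Ek es (k - 1) - N) N A \<and> Pos \<C> (Ek es (k - 1) - N) N (insert e A))"
    proof
      assume PP: "Pos \<C> (Ek es (k - 1) - N) N A \<and> Pos \<C> (Ek es (k - 1) - N) N (insert e A)"
      from PP obtain Y where Y: "Y\<in>\<C>" "supp Y \<inter> (Ek es (k - 1) - N) = {}" "supp Y - N \<noteq> {}" "negs N A Y = {}"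
        unfolding Pos_def by blast
      from PP obtain Y' where Y': "Y'\<in>\<C>" "supp Y' \<inter> (Ek es (k - 1) - N) = {}" "supp Y' - N \<noteq> {}" "negs N (insert e A) Y' = {}"
        unfolding Pos_def by blast
      have eY: "e \<in> supp Y" using notPos Y D by (auto simp: Pos_def)
      have eY': "e \<in> supp Y'"
      proof (rule ccontr)
        assume "e \<notin> supp Y'"
        then have "negs N A Y' = {}" using Y'(4) by (auto simp: negs_def supp_def)
        then show False using notPos Y' D \<open>e \<notin> supp Y'\<close> by (auto simp: Pos_def)
      qed
      have f0: "e \<in> supp Y - N" "e \<notin> negs N A Y" using eY False Y(4) by auto
      have f1: "e \<in> negs N A Y'" using eY' False Y'(4) eA by (auto simp: negs_def supp_def)
      have ne1: "Y \<noteq> Y'" using f0 f1 by auto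
      have ne2: "Y \<noteq> sneg Y'"
      proof
        assume YY: "Y = sneg Y'"
        have "supp Y \<subseteq> insert e N"
        proof
          fix x assume x: "x \<in> supp Y"
          show "x \<in> insert e N"
          proof (rule ccontr)
            assume "x \<notin> insert e N"
            then show False using x Y(4) Y'(4) YY
              by (cases "x \<in> A") (auto simp: negs_def supp_def sneg_def)
          qed
        qed
        then show False using nbc_loop[OF dist nbcN NE1 k Y(1)] e_def by simp
      qed
      obtain Z where Z: "Z\<in>\<C>" "fst Z \<subseteq> fst Y \<union> fst Y' - {e}" "snd Z \<subseteq> snd Y \<union> snd Y' - {e}"
        using elim'[OF om Y(1) Y'(1) ne1 ne2 f0 f1] by blast
      have sZ: "supp Z \<subseteq> supp Y \<union> supp Y' - {e}" using Z by (auto simp: supp_def)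
      have "supp Z - N \<noteq> {}" using ind Z by blast
      moreover have "supp Z \<inter> (Ek es k - N) = {}" using sZ Y Y' D by blast
      moreover have "negs N A Z = {}" using Z Y(4) Y'(4) by (auto simp: negs_def)
      ultimately show False using notPos Z by (auto simp: Pos_def)
    qed
    show ?thesis
    proof (cases "\<not> Pos \<C> (Ek es (k - 1) - N) N A \<and> Pos \<C> (Ek es (k - 1) - N) N (insert e A)")
      case True
      have q: "(N, A) \<in> scriptN E \<C> es (k - 1)"
        unfolding scriptN_def using NE1 AE1 nbcN acyc_minor[OF om ind, of es "k - 1" A] True by auto
      have "\<not> acyclic_om (reorient {e} (minorM E \<C> es (k - 1) N A))"
        using acyc_minor2[OF om ind eA, of es "k - 1"] True by auto
      then have "psi E \<C> es k (N, A) = p" using psi_eq[OF e_def, of E \<C> N A] eA pNA by simp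
      then show ?thesis using q by blast
    next
      case c2: False
      then have np: "\<not> Pos \<C> (Ek es (k - 1) - N) N (insert e A)" using key by blast
      have q: "(N, insert e A) \<in> scriptN E \<C> es (k - 1)"
        unfolding scriptN_def using NE1 AE1 eE enot nbcN acyc_minor[OF om ind, of es "k - 1" "insert e A"] np
        by auto
      have "psi E \<C> es k (N, insert e A) = p" using psi_eq[OF e_def, of E \<C> N "insert e A"] eA pNA by simp
      then show ?thesis using q by blast
    qed
  qed
qed

end
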